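(* Consider a PL+C model with $\sum_{i\in\mathcal U}p_i\ge\alpha k$ for a given $\alpha>1$. Given as input the items $\mathcal U$, the utilities $u_i$, the values $\Pr_{PLC}(\mathcal R_{i\le\ell})$ for all $i\in\mathcal U$ and $\ell=1,\dots,k$, and $\alpha$, the following algorithm returns numbers $b_i$ with $p_i\ge b_i$ for every $i\in\mathcal U$, and runs in time $O(kn^2)$. Algorithm: (1) set $b_i\gets\Pr_{PLC}(\mathcal R_{i\le k})\cdot[1-(\alpha e^{1-\alpha})^k]$ for each $i$; (2) form the directed graph $G$ on vertex set $\mathcal U$ with an edge $(i,j)$ whenever $u_i>u_j$ and there exists $\ell$ with $\Pr_{PLC}(\mathcal R_{i\le\ell})<\Pr_{PLC}(\mathcal R_{j\le\ell})$ ($G$ is acyclic); (3) for each $i$ in a topological order of $G$, for each out-neighbor $j$ of $i$, for $\ell=1,\dots,k$: let $c=\Pr_{PLC}(\mathcal R_{i\le\ell})/\Pr_{PLC}(\mathcal R_{j\le\ell})$, and if $c\le1$ set $b_j\gets\max\{b_j,\ b_i/(c-cb_i+b_i)\}$; (4) return all $b_i$.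
   Context: PL+C model: universe $\mathcal U=\{1,\dots,n\}$, fixed ranking length $k\le n$. Each item $i$ has a utility $u_i\in\mathbb R$ and a consideration probability $p_i\in(0,1]$. A consideration set $C$ is drawn by including each item independently with probability $p_i$, conditioned on $|C|\ge k$: $\Pr_C(C)=\frac{1}{z_{k,p}}\prod_{h\in C}p_h\prod_{h\notin C}(1-p_h)$ for $|C|\ge k$ (with $z_{k,p}$ the normalizing constant), and $0$ otherwise. Given $C$, a length-$k$ ranking $r$ has probability $\Pr_{PL}(r\mid C)=\prod_{t=1}^k \frac{\exp(u_{r_t})}{\sum_{h\in C\setminus\{r_1,\dots,r_{t-1}\}}\exp(u_h)}$ if all $r_t\in C$, else $0$. $\Pr_{PLC}(r)=\sum_C\Pr_C(C)\Pr_{PL}(r\mid C)$, and for a set $R$ of rankings $\Pr_{PLC}(R)=\sum_{r\in R}\Pr_{PLC}(r)$. $\mathcal R_{i\le\ell}$ is the set of length-$k$ rankings containing $i$ in one of the first $\ell$ positions. Running time counts arithmetic operations on the given numbers as unit cost. *)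

theory Defs
  imports Complex_Main
begin

definition universe :: "nat \<Rightarrow> nat set" where
  "universe n = {1..n}"

definition rankings :: "nat \<Rightarrow> nat \<Rightarrow> nat list set" where
  "rankings n k = {r. distinct r \<and> length r = k \<and> set r \<subseteq> universe n}"

definition cs_weight :: "nat \<Rightarrow> (nat \<Rightarrow> real) \<Rightarrow> nat set \<Rightarrow> real" where
  "cs_weight n p C = (\<Prod>h\<in>C. p h) * (\<Prod>h\<in>universe n - C. 1 - p h)"

definition z_norm :: "nat \<Rightarrow> nat \<Rightarrow> (nat \<Rightarrow> real) \<Rightarrow> real" where
  "z_norm n k p = (\<Sum>C\<in>{C. C \<subseteq> universe n \<and> k \<le> card C}. cs_weight n p C)"

definition Pr_C :: "nat \<Rightarrow> nat \<Rightarrow> (nat \<Rightarrow> real) \<Rightarrow> nat set \<Rightarrow> real" where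
  "Pr_C n k p C = (if C \<subseteq> universe n \<and> k \<le> card C
                   then cs_weight n p C / z_norm n k p else 0)"

definition Pr_PL :: "(nat \<Rightarrow> real) \<Rightarrow> nat set \<Rightarrow> nat list \<Rightarrow> real" where
  "Pr_PL u C r = (if set r \<subseteq> C then
      (\<Prod>t<length r. exp (u (r ! t)) / (\<Sum>h\<in>C - set (take t r). exp (u h)))
    else 0)"

definition Pr_PLC :: "nat \<Rightarrow> nat \<Rightarrow> (nat \<Rightarrow> real) \<Rightarrow> (nat \<Rightarrow> real) \<Rightarrow> nat list \<Rightarrow> real" where
  "Pr_PLC n k p u r = (\<Sum>C\<in>Pow (universe n). Pr_C n k p C * Pr_PL u C r)"

definition R_top :: "nat \<Rightarrow> nat \<Rightarrow> nat \<Rightarrow> nat \<Rightarrow> nat list set" where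
  "R_top n k i l = {r \<in> rankings n k. i \<in> set (take l r)}"

definition Pr_top :: "nat \<Rightarrow> nat \<Rightarrow> (nat \<Rightarrow> real) \<Rightarrow> (nat \<Rightarrow> real) \<Rightarrow> nat \<Rightarrow> nat \<Rightarrow> real" where
  "Pr_top n k p u i l = (\<Sum>r\<in>R_top n k i l. Pr_PLC n k p u r)"

definition G_edge :: "nat \<Rightarrow> nat \<Rightarrow> (nat \<Rightarrow> real) \<Rightarrow> (nat \<Rightarrow> nat \<Rightarrow> real) \<Rightarrow> nat \<Rightarrow> nat \<Rightarrow> bool" where
  "G_edge n k u Q i j \<longleftrightarrow> i \<in> universe n \<and> j \<in> universe n \<and> u i > u j \<and>
      (\<exists>l\<in>{1..k}. Q i l < Q j l)"

definition topo_order :: "nat \<Rightarrow> nat \<Rightarrow> (nat \<Rightarrow> real) \<Rightarrow> (nat \<Rightarrow> nat \<Rightarrow> real) \<Rightarrow> nat list \<Rightarrow> bool" where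
  "topo_order n k u Q ord \<longleftrightarrow> distinct ord \<and> set ord = universe n \<and>
     (\<forall>i j. G_edge n k u Q i j \<longrightarrow>
        (\<exists>a b. a < b \<and> b < length ord \<and> ord ! a = i \<and> ord ! b = j))"

definition init_bounds :: "nat \<Rightarrow> (nat \<Rightarrow> nat \<Rightarrow> real) \<Rightarrow> real \<Rightarrow> nat \<Rightarrow> real" where
  "init_bounds k Q \<alpha> i = Q i k * (1 - (\<alpha> * exp (1 - \<alpha>)) ^ k)"

text \<open>Step (3), instrumented with an operation counter (second component).
  Inner loop over l for a fixed edge (i,j): constant work per iteration.\<close>
definition process_edge :: "nat \<Rightarrow> (nat \<Rightarrow> nat \<Rightarrow> real) \<Rightarrow> nat \<Rightarrow> nat \<Rightarrow>
    (nat \<Rightarrow> real) \<times> nat \<Rightarrow> (nat \<Rightarrow> real) \<times> nat" where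
  "process_edge k Q i j bt = fold (\<lambda>l (b, t).
      (let c = Q i l / Q j l in
         if c \<le> 1 then b(j := max (b j) (b i / (c - c * b i + b i))) else b,
       t + 1)) [1..<Suc k] bt"

text \<open>Processing vertex i: scan the adjacency row (n operations) and treat each out-neighbor.\<close>
definition process_vertex :: "nat \<Rightarrow> nat \<Rightarrow> (nat \<Rightarrow> real) \<Rightarrow> (nat \<Rightarrow> nat \<Rightarrow> real) \<Rightarrow> nat \<Rightarrow>
    (nat \<Rightarrow> real) \<times> nat \<Rightarrow> (nat \<Rightarrow> real) \<times> nat" where
  "process_vertex n k u Q i bt =
     fold (\<lambda>j. process_edge k Q i j) (filter (G_edge n k u Q i) [1..<Suc n])
       (fst bt, snd bt + n)"

text \<open>Operation count of steps (1) and (2): n for the initialization, n*n*k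
  comparisons to build G as an adjacency matrix, and n + |E| for computing a
  topological order (e.g. Kahn's algorithm).\<close>
definition pre_cost :: "nat \<Rightarrow> nat \<Rightarrow> (nat \<Rightarrow> real) \<Rightarrow> (nat \<Rightarrow> nat \<Rightarrow> real) \<Rightarrow> nat" where
  "pre_cost n k u Q = n + n * n * k + (n + card {(i, j). G_edge n k u Q i j})"

definition plc_bounds_alg :: "nat \<Rightarrow> nat \<Rightarrow> (nat \<Rightarrow> real) \<Rightarrow> (nat \<Rightarrow> nat \<Rightarrow> real) \<Rightarrow> real \<Rightarrow>
    nat list \<Rightarrow> (nat \<Rightarrow> real) \<times> nat" where
  "plc_bounds_alg n k u Q \<alpha> ord =
     fold (\<lambda>i. process_vertex n k u Q i) ord (init_bounds k Q \<alpha>, pre_cost n k u Q)"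

end

theory Submission
  imports Defs
begin

definition Lr :: "nat set \<Rightarrow> nat \<Rightarrow> nat list set" where
  "Lr C m = {r. distinct r \<and> length r = m \<and> set r \<subseteq> C}"

definition Tm :: "(nat \<Rightarrow> real) \<Rightarrow> nat set \<Rightarrow> nat \<Rightarrow> real" where
  "Tm u C m = (\<Sum>r\<in>Lr C m. Pr_PL u C r)"

definition qf :: "(nat \<Rightarrow> real) \<Rightarrow> nat set \<Rightarrow> nat \<Rightarrow> nat \<Rightarrow> nat \<Rightarrow> real" where
  "qf u C l m i = (\<Sum>r\<in>Lr C m. Pr_PL u C r * (if i \<in> set (take l r) then 1 else 0))"

lemma Lr_finite: "finite C \<Longrightarrow> finite (Lr C m)"
  unfolding Lr_def by (rule finite_subset[OF _ finite_lists_length_eq[of C m]]) auto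

lemma Lr_0: "Lr C 0 = {[]}" unfolding Lr_def by auto

lemma Lr_Suc: "Lr C (Suc m) = (\<lambda>(x,r). x#r) ` (SIGMA x:C. Lr (C-{x}) m)"
proof
  show "Lr C (Suc m) \<subseteq> (\<lambda>(x,r). x#r) ` (SIGMA x:C. Lr (C-{x}) m)"
  proof
    fix r assume "r \<in> Lr C (Suc m)"
    then obtain x r' where "r = x # r'" "distinct (x#r')" "length r' = m" "set (x#r') \<subseteq> C"
      unfolding Lr_def by (auto simp: length_Suc_conv)
    then show "r \<in> (\<lambda>(x,r). x#r) ` (SIGMA x:C. Lr (C-{x}) m)"
      unfolding Lr_def by (auto intro!: image_eqI[where x="(x,r')"])
  qed
qed (auto simp: Lr_def)

lemma Pr_PL_nonneg: "0 \<le> Pr_PL u C r"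
  unfolding Pr_PL_def by (auto intro!: prod_nonneg divide_nonneg_nonneg sum_nonneg)

lemma Pr_PL_Nil: "Pr_PL u C [] = 1" by (simp add: Pr_PL_def)

lemma Pr_PL_Cons:
  assumes "x \<in> C" "x \<notin> set r"
  shows "Pr_PL u C (x#r) = exp (u x) / (\<Sum>h\<in>C. exp (u h)) * Pr_PL u (C-{x}) r"
proof -
  have s: "(set (x#r) \<subseteq> C) = (set r \<subseteq> C - {x})" using assms by auto
  have e: "\<And>t. C - set (take (Suc t) (x#r)) = (C - {x}) - set (take t r)" by auto
  have p: "(\<Prod>t<length (x#r). exp (u ((x#r) ! t)) / (\<Sum>h\<in>C - set (take t (x#r)). exp (u h)))
     = exp (u x) / (\<Sum>h\<in>C. exp (u h)) * (\<Prod>t<length r. exp (u (r ! t)) / (\<Sum>h\<in>(C-{x}) - set (take t r). exp (u h)))"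
    by (simp only: length_Cons prod.lessThan_Suc_shift e) simp
  show ?thesis unfolding Pr_PL_def using s p by simp
qed

lemma sum_Lr_Suc:
  assumes "finite C"
  shows "(\<Sum>r\<in>Lr C (Suc m). Pr_PL u C r * g r) =
    (\<Sum>x\<in>C. exp (u x) / (\<Sum>h\<in>C. exp (u h)) * (\<Sum>r\<in>Lr (C-{x}) m. Pr_PL u (C-{x}) r * g (x#r)))"
proof -
  have inj: "inj_on (\<lambda>(x,r). x#r) (SIGMA x:C. Lr (C-{x}) m)" by (auto simp: inj_on_def)
  have "(\<Sum>r\<in>Lr C (Suc m). Pr_PL u C r * g r) =
      (\<Sum>(x,r)\<in>(SIGMA x:C. Lr (C-{x}) m). Pr_PL u C (x#r) * g (x#r))"
    unfolding Lr_Suc by (subst sum.reindex[OF inj]) (simp add: case_prod_unfold)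
  also have "\<dots> = (\<Sum>x\<in>C. \<Sum>r\<in>Lr (C-{x}) m. Pr_PL u C (x#r) * g (x#r))"
    using assms by (subst sum.Sigma) (auto simp: Lr_finite)
  also have "\<dots> = (\<Sum>x\<in>C. exp (u x) / (\<Sum>h\<in>C. exp (u h)) * (\<Sum>r\<in>Lr (C-{x}) m. Pr_PL u (C-{x}) r * g (x#r)))"
  proof (rule sum.cong[OF refl])
    fix x assume x: "x \<in> C"
    have "\<And>r. r \<in> Lr (C-{x}) m \<Longrightarrow> Pr_PL u C (x#r) * g (x#r) = exp (u x) / (\<Sum>h\<in>C. exp (u h)) * (Pr_PL u (C-{x}) r * g (x#r))"
      using x by (subst Pr_PL_Cons) (auto simp: Lr_def)
    then show "(\<Sum>r\<in>Lr (C-{x}) m. Pr_PL u C (x#r) * g (x#r)) = exp (u x) / (\<Sum>h\<in>C. exp (u h)) * (\<Sum>r\<in>Lr (C-{x}) m. Pr_PL u (C-{x}) r * g (x#r))"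
      by (simp add: sum_distrib_left)
  qed
  finally show ?thesis .
qed

lemma Z_pos: "finite (C::nat set) \<Longrightarrow> C \<noteq> {} \<Longrightarrow> 0 < (\<Sum>h\<in>C. exp ((u::nat\<Rightarrow>real) h))"
  by (rule sum_pos) auto

lemma sum_w_Z: "finite (C::nat set) \<Longrightarrow> C \<noteq> {} \<Longrightarrow> (\<Sum>x\<in>C. exp ((u::nat\<Rightarrow>real) x) / (\<Sum>h\<in>C. exp (u h))) = 1"
  using Z_pos[of C u] by (simp add: sum_divide_distrib[symmetric])

lemma Tm_Suc: "finite C \<Longrightarrow> Tm u C (Suc m) = (\<Sum>x\<in>C. exp (u x) / (\<Sum>h\<in>C. exp (u h)) * Tm u (C-{x}) m)"
  using sum_Lr_Suc[where C=C and m=m and u=u and g="\<lambda>_. 1"] by (simp add: Tm_def)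

lemma Tm_nonneg: "0 \<le> Tm u C m"
  unfolding Tm_def by (auto intro!: sum_nonneg Pr_PL_nonneg)

lemma w_nonneg: "0 \<le> exp (u x) / (\<Sum>h\<in>C. exp ((u::nat\<Rightarrow>real) h))"
  by (simp add: sum_nonneg)

lemma Tm_le1: "finite C \<Longrightarrow> Tm u C m \<le> 1"
proof (induction m arbitrary: C)
  case 0 then show ?case by (simp add: Tm_def Lr_0 Pr_PL_Nil)
next
  case (Suc m)
  show ?case
  proof (cases "C = {}")
    case True then show ?thesis by (simp add: Tm_Suc)
  next
    case False
    have "Tm u C (Suc m) \<le> (\<Sum>x\<in>C. exp (u x) / (\<Sum>h\<in>C. exp (u h)) * 1)"
      unfolding Tm_Suc[OF Suc.prems]
    proof (rule sum_mono)
      fix x assume "x \<in> C"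
      have "Tm u (C - {x}) m \<le> 1" using Suc.IH[of "C - {x}"] Suc.prems by simp
      then show "exp (u x) / (\<Sum>h\<in>C. exp (u h)) * Tm u (C - {x}) m \<le> exp (u x) / (\<Sum>h\<in>C. exp (u h)) * 1"
        by (rule mult_left_mono) (rule w_nonneg)
    qed
    then show ?thesis using sum_w_Z[OF Suc.prems False, of u] by simp
  qed
qed

lemma Tm_eq1: "finite C \<Longrightarrow> m \<le> card C \<Longrightarrow> Tm u C m = 1"
proof (induction m arbitrary: C)
  case 0 then show ?case by (simp add: Tm_def Lr_0 Pr_PL_Nil)
next
  case (Suc m)
  have ne: "C \<noteq> {}" using Suc.prems(2) by auto
  have "Tm u C (Suc m) = (\<Sum>x\<in>C. exp (u x) / (\<Sum>h\<in>C. exp (u h)) * 1)"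
    unfolding Tm_Suc[OF Suc.prems(1)]
  proof (rule sum.cong[OF refl])
    fix x assume x: "x \<in> C"
    have "m \<le> card (C - {x})" using Suc.prems x by (simp add: card_Diff_singleton)
    then have "Tm u (C - {x}) m = 1" using Suc.IH[of "C - {x}"] Suc.prems(1) by simp
    then show "exp (u x) / (\<Sum>h\<in>C. exp (u h)) * Tm u (C - {x}) m = exp (u x) / (\<Sum>h\<in>C. exp (u h)) * 1"
      by simp
  qed
  then show ?case using sum_w_Z[OF Suc.prems(1) ne, of u] by simp
qed

lemma qf_nonneg: "0 \<le> qf u C l m i"
  unfolding qf_def by (auto intro!: sum_nonneg Pr_PL_nonneg)

lemma qf_le_Tm: "qf u C l m i \<le> Tm u C m"
  unfolding qf_def Tm_def by (rule sum_mono) (auto simp: Pr_PL_nonneg)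

lemma qf_le1: "finite C \<Longrightarrow> qf u C l m i \<le> 1"
  using qf_le_Tm Tm_le1 order_trans by blast

lemma qf_0l: "qf u C 0 m i = 0" by (simp add: qf_def)
lemma qf_0m: "qf u C l 0 i = 0" by (simp add: qf_def Lr_0)

lemma qf_notin: "i \<notin> C \<Longrightarrow> qf u C l m i = 0"
  unfolding qf_def Lr_def by (rule sum.neutral) (auto dest: in_set_takeD)

lemma qf_Suc: "finite C \<Longrightarrow> qf u C (Suc l) (Suc m) i =
   (\<Sum>x\<in>C. exp (u x) / (\<Sum>h\<in>C. exp (u h)) * (if x = i then Tm u (C-{x}) m else qf u (C-{x}) l m i))"
  unfolding qf_def
  apply (subst sum_Lr_Suc, assumption)
  apply (rule sum.cong, simp)
  apply (auto simp: Tm_def)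
  done


lemma qf_ins:
  assumes "finite S" "i \<notin> S" "m \<le> card S"
  shows "qf u (insert i S) (Suc l) (Suc m) i =
    (exp (u i) + (\<Sum>x\<in>S. exp (u x) * qf u (insert i (S-{x})) l m i)) / (exp (u i) + (\<Sum>x\<in>S. exp (u x)))"
proof -
  let ?Z = "exp (u i) + (\<Sum>x\<in>S. exp (u x))"
  have Z: "(\<Sum>h\<in>insert i S. exp (u h)) = ?Z" using assms by simp
  have T: "Tm u (insert i S - {i}) m = 1" using assms by (simp add: Tm_eq1)
  have "qf u (insert i S) (Suc l) (Suc m) i =
     exp (u i) / ?Z * 1 + (\<Sum>x\<in>S. exp (u x) / ?Z * qf u (insert i (S-{x})) l m i)"
    unfolding qf_Suc[OF finite_insert[THEN iffD2, OF assms(1)]] Z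
    using assms T
    apply (subst sum.insert, simp, simp)
    apply (intro arg_cong2[where f="(+)"] refl sum.cong)
     apply simp
    apply (subgoal_tac "x \<noteq> i")
     apply (simp add: insert_Diff_if)
    apply blast
    done
  also have "\<dots> = (exp (u i) + (\<Sum>x\<in>S. exp (u x) * qf u (insert i (S-{x})) l m i)) / ?Z"
    by (simp add: add_divide_distrib sum_divide_distrib)
  finally show ?thesis .
qed

lemma frac_ineq:
  fixes wi wj A B W :: real
  assumes "0 < wj" "wj \<le> wi" "0 \<le> B" "B \<le> A" "A \<le> W"
  shows "(wj + B) / (wj + W) \<le> (wi + A) / (wi + W)"
proof -
  have W0: "0 \<le> W" using assms by linarith
  have e: "(wi + A) * (wj + W) - (wj + B) * (wi + W) = (wi - wj) * (W - A) + (A - B) * (wi + W)"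
    by (simp add: algebra_simps)
  have "0 \<le> (wi - wj) * (W - A) + (A - B) * (wi + W)"
    using assms W0 by (intro add_nonneg_nonneg mult_nonneg_nonneg) auto
  then have "(wj + B) * (wi + W) \<le> (wi + A) * (wj + W)" using e by linarith
  moreover have "0 < wj + W" "0 < wi + W" using assms W0 by auto
  ultimately show ?thesis by (simp add: divide_simps)
qed

lemma qf_swap:
  assumes "finite S" "i \<notin> S" "j \<notin> S" "u j \<le> u i" "m \<le> Suc (card S)"
  shows "qf u (insert j S) l m j \<le> qf u (insert i S) l m i"
  using assms
proof (induction m arbitrary: S l)
  case 0 then show ?case by (simp add: qf_0m)
next
  case (Suc m)
  show ?case
  proof (cases l)
    case 0 then show ?thesis by (simp add: qf_0l)
  next
    case (Suc l')
    have mS: "m \<le> card S" using Suc.prems by simp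
    define A where "A = (\<Sum>x\<in>S. exp (u x) * qf u (insert i (S-{x})) l' m i)"
    define B where "B = (\<Sum>x\<in>S. exp (u x) * qf u (insert j (S-{x})) l' m j)"
    define W where "W = (\<Sum>x\<in>S. exp (u x))"
    have qi: "qf u (insert i S) l (Suc m) i = (exp (u i) + A) / (exp (u i) + W)"
      unfolding Suc A_def W_def using Suc.prems mS by (intro qf_ins) auto
    have qj: "qf u (insert j S) l (Suc m) j = (exp (u j) + B) / (exp (u j) + W)"
      unfolding Suc B_def W_def using Suc.prems mS by (intro qf_ins) auto
    have B0: "0 \<le> B" unfolding B_def by (intro sum_nonneg mult_nonneg_nonneg qf_nonneg) auto
    have BA: "B \<le> A" unfolding A_def B_def
    proof (rule sum_mono, rule mult_left_mono)
      fix x assume x: "x \<in> S"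
      have "m \<le> Suc (card (S - {x}))" using mS x Suc.prems(1) by (simp add: card_Diff_singleton)
      then show "qf u (insert j (S - {x})) l' m j \<le> qf u (insert i (S - {x})) l' m i"
        using Suc.IH[of "S - {x}" l'] Suc.prems by auto
    qed simp
    have AW: "A \<le> W" unfolding A_def W_def
    proof (rule sum_mono)
      fix x assume x: "x \<in> S"
      have "qf u (insert i (S - {x})) l' m i \<le> 1" using Suc.prems(1) by (simp add: qf_le1)
      then show "exp (u x) * qf u (insert i (S - {x})) l' m i \<le> exp (u x)"
        using mult_left_mono[of _ 1 "exp (u x)"] by simp
    qed
    show ?thesis unfolding qi qj
      by (rule frac_ineq) (use B0 BA AW Suc.prems in auto)
  qed
qed

lemma qf_pos:
  assumes "finite C" "i \<in> C" "1 \<le> l" "1 \<le> m" "m \<le> card C"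
  shows "0 < qf u C l m i"
proof -
  obtain l' m' where lm: "l = Suc l'" "m = Suc m'" using assms by (metis Suc_le_D One_nat_def)
  let ?f = "\<lambda>x. exp (u x) / (\<Sum>h\<in>C. exp (u h)) * (if x = i then Tm u (C-{x}) m' else qf u (C-{x}) l' m' i)"
  have "m' \<le> card (C - {i})" using assms lm by (simp add: card_Diff_singleton)
  then have "?f i = exp (u i) / (\<Sum>h\<in>C. exp (u h))" using assms by (simp add: Tm_eq1)
  also have "\<dots> > 0" using assms by (intro divide_pos_pos Z_pos) auto
  also have "?f i \<le> sum ?f C"
    by (rule member_le_sum) (use assms in \<open>auto intro!: divide_nonneg_nonneg mult_nonneg_nonneg qf_nonneg sum_nonneg\<close>)
  finally show ?thesis unfolding lm qf_Suc[OF assms(1)] .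
qed

lemma qf_mono:
  assumes "finite C" "i \<in> C" "j \<in> C" "i \<noteq> j" "u j \<le> u i" "m \<le> card C"
  shows "qf u C l m j \<le> qf u C l m i"
  using assms
proof (induction m arbitrary: C l)
  case 0 then show ?case by (simp add: qf_0m)
next
  case (Suc m)
  show ?case
  proof (cases l)
    case 0 then show ?thesis by (simp add: qf_0l)
  next
    case (Suc l')
    let ?Z = "\<Sum>h\<in>C. exp (u h)"
    define S where "S = C - {i} - {j}"
    have fS: "finite S" using Suc.prems unfolding S_def by auto
    have Ci: "C - {i} = insert j S" and Cj: "C - {j} = insert i S" using Suc.prems unfolding S_def by auto
    have Ceq: "C = insert i (insert j S)" using Suc.prems unfolding S_def by auto
    have iS: "i \<notin> S" "j \<notin> S" unfolding S_def by auto
    have cS: "card C = Suc (Suc (card S))" by (subst Ceq) (use fS iS Suc.prems(4) in simp)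
    define G where "G = (\<lambda>k x. exp (u x) / ?Z * (if x = k then Tm u (C-{x}) m else qf u (C-{x}) l' m k))"
    have qk0: "qf u C l (Suc m) k = sum (G k) C" for k
      unfolding Suc qf_Suc[OF Suc.prems(1)] G_def by simp
    have qk: "qf u C l (Suc m) k = G k i + G k j + sum (G k) S" for k
      unfolding qk0 by (subst Ceq) (use iS Suc.prems(4) fS in simp)
    have Tm1: "Tm u (C - {i}) m = 1" "Tm u (C - {j}) m = 1"
      using Suc.prems by (auto simp: Tm_eq1 card_Diff_singleton)
    define a where "a = qf u (C - {j}) l' m i"
    define b where "b = qf u (C - {i}) l' m j"
    have ba: "b \<le> a" unfolding a_def b_def Ci Cj
      by (rule qf_swap) (use fS iS Suc.prems cS in auto)
    have b1: "b \<le> 1" unfolding b_def using Suc.prems by (simp add: qf_le1)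
    have wij: "exp (u j) \<le> exp (u i)" using Suc.prems by simp
    have "exp (u j) * (1 - a) \<le> exp (u j) * (1 - b)" using ba by (simp add: mult_left_mono)
    also have "\<dots> \<le> exp (u i) * (1 - b)" using wij b1 by (simp add: mult_right_mono)
    finally have key: "exp (u i) * b + exp (u j) \<le> exp (u i) + exp (u j) * a"
      by (simp add: algebra_simps)
    have Zp: "0 < ?Z" using Suc.prems by (intro Z_pos) auto
    have ij: "G j i + G j j \<le> G i i + G i j"
      unfolding G_def using Suc.prems(4) Tm1 key Zp
      by (simp add: a_def[symmetric] b_def[symmetric] divide_simps)
    have rest: "sum (G j) S \<le> sum (G i) S"
    proof (rule sum_mono)
      fix x assume x: "x \<in> S"
      have "qf u (C - {x}) l' m j \<le> qf u (C - {x}) l' m i"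
        using Suc.IH[of "C - {x}" l'] Suc.prems x unfolding S_def by (auto simp: card_Diff_singleton)
      moreover have "x \<noteq> i" "x \<noteq> j" using x iS by auto
      ultimately show "G j x \<le> G i x" unfolding G_def
        by (simp del: times_divide_eq_left divide_divide_eq_left add: mult_left_mono w_nonneg)
    qed
    show ?thesis unfolding qk using ij rest by linarith
  qed
qed


lemma fin_U[simp]: "finite (universe n)" by (simp add: universe_def)
lemma card_U[simp]: "card (universe n) = n" by (simp add: universe_def)

lemma sum_Pow_insert:
  assumes "finite A" "a \<notin> A"
  shows "(\<Sum>C\<in>Pow (insert a A). g C) = (\<Sum>S\<in>Pow A. g S + g (insert a S))"
proof -
  have d: "Pow A \<inter> insert a ` Pow A = {}" using assms by auto
  have inj: "inj_on (insert a) (Pow A)" using assms by (auto simp: inj_on_def) 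
  have "(\<Sum>C\<in>Pow (insert a A). g C) = (\<Sum>C\<in>Pow A. g C) + (\<Sum>C\<in>insert a ` Pow A. g C)"
    unfolding Pow_insert using assms d by (intro sum.union_disjoint) auto
  also have "(\<Sum>C\<in>insert a ` Pow A. g C) = (\<Sum>S\<in>Pow A. g (insert a S))"
    by (rule sum.reindex[OF inj, unfolded comp_def])
  finally show ?thesis by (simp add: sum.distrib)
qed

lemma sum_Pow_insert2:
  assumes "finite V" "i \<notin> V" "j \<notin> V" "i \<noteq> j"
  shows "(\<Sum>C\<in>Pow (insert i (insert j V)). g C) =
    (\<Sum>S\<in>Pow V. g S + g (insert i S) + g (insert j S) + g (insert i (insert j S)))"
proof -
  have "(\<Sum>C\<in>Pow (insert i (insert j V)). g C) = (\<Sum>T\<in>Pow (insert j V). g T + g (insert i T))"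
    using assms by (intro sum_Pow_insert) auto
  also have "\<dots> = (\<Sum>S\<in>Pow V. (g S + g (insert i S)) + (g (insert j S) + g (insert i (insert j S))))"
    using assms by (intro sum_Pow_insert) auto
  finally show ?thesis by (simp add: add.assoc)
qed

context
  fixes n k :: nat and p :: "nat \<Rightarrow> real"
  assumes kn: "k \<le> n" and p01: "\<forall>i\<in>universe n. 0 < p i \<and> p i \<le> 1"
begin

lemma cw_nonneg: "C \<subseteq> universe n \<Longrightarrow> 0 \<le> cs_weight n p C"
  unfolding cs_weight_def using p01
  by (intro mult_nonneg_nonneg prod_nonneg) (auto simp: less_imp_le subsetD)

lemma cw_sum_gen:
  "(\<Sum>C\<in>Pow (universe n). cs_weight n p C * (\<Prod>x\<in>C. t x)) = (\<Prod>x\<in>universe n. p x * t x + (1 - p x))"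
  unfolding cs_weight_def prod_add[OF fin_U]
  by (intro sum.cong refl) (simp add: prod.distrib)

lemma cw_sum1: "(\<Sum>C\<in>Pow (universe n). cs_weight n p C) = 1"
  using cw_sum_gen[of "\<lambda>_. 1"] by simp

lemma cw_sum_i:
  assumes "i \<in> universe n"
  shows "(\<Sum>C\<in>Pow (universe n). cs_weight n p C * (if i \<in> C then 1 else 0)) = p i"
proof -
  have "(\<Sum>C\<in>Pow (universe n). cs_weight n p C * (if i \<in> C then 1 else 0)) =
     (\<Sum>C\<in>Pow (universe n). (\<Prod>x\<in>C. p x) * (\<Prod>x\<in>universe n - C. if x = i then 0 else 1 - p x))"
  proof (rule sum.cong[OF refl])
    fix C assume C: "C \<in> Pow (universe n)"
    show "cs_weight n p C * (if i \<in> C then 1 else 0) =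
      (\<Prod>x\<in>C. p x) * (\<Prod>x\<in>universe n - C. if x = i then 0 else 1 - p x)"
    proof (cases "i \<in> C")
      case True
      then have "(\<Prod>x\<in>universe n - C. if x = i then 0 else 1 - p x) = (\<Prod>x\<in>universe n - C. 1 - p x)"
        by (intro prod.cong) auto
      then show ?thesis using True by (simp add: cs_weight_def)
    next
      case False
      then have "(\<Prod>x\<in>universe n - C. if x = i then 0 else 1 - p x) = 0"
        using assms by (intro prod_zero) auto
      then show ?thesis using False by simp
    qed
  qed
  also have "\<dots> = (\<Prod>x\<in>universe n. p x + (if x = i then 0 else 1 - p x))"
    by (rule prod_add[OF fin_U, symmetric])
  also have "\<dots> = (\<Prod>x\<in>universe n. if x = i then p i else 1)"
    by (intro prod.cong) auto
  also have "\<dots> = p i" using assms by (simp add: prod.If_cases)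
  finally show ?thesis .
qed

lemma cw_U_pos: "0 < cs_weight n p (universe n)"
  unfolding cs_weight_def using p01 by (auto intro!: prod_pos)

lemma z_pos: "0 < z_norm n k p"
proof -
  have "cs_weight n p (universe n) \<le> z_norm n k p"
    unfolding z_norm_def
    by (rule member_le_sum) (auto simp: kn intro!: cw_nonneg finite_subset[of _ "Pow (universe n)"])
  then show ?thesis using cw_U_pos by linarith
qed

lemma z_eq: "z_norm n k p = (\<Sum>C\<in>Pow (universe n). if k \<le> card C then cs_weight n p C else 0)"
proof -
  have "{C. C \<subseteq> universe n \<and> k \<le> card C} = Pow (universe n) \<inter> {C. k \<le> card C}" by auto
  then show ?thesis unfolding z_norm_def by (simp add: sum.inter_restrict)
qed

lemma z_lower:
  assumes a1: "1 < \<alpha>" and sp: "(\<Sum>i\<in>universe n. p i) \<ge> \<alpha> * real k"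
  shows "1 - (\<alpha> * exp (1 - \<alpha>)) ^ k \<le> z_norm n k p"
proof -
  let ?U = "universe n"
  define t where "t = 1 / \<alpha>"
  have t0: "0 < t" "t \<le> 1" using a1 by (auto simp: t_def)
  have split: "1 = z_norm n k p + (\<Sum>C\<in>Pow ?U. if k \<le> card C then 0 else cs_weight n p C)"
    unfolding z_eq cw_sum1[symmetric] sum.distrib[symmetric] by (intro sum.cong) auto
  have "(\<Sum>C\<in>Pow ?U. if k \<le> card C then 0 else cs_weight n p C)
      \<le> (\<Sum>C\<in>Pow ?U. cs_weight n p C * (\<Prod>x\<in>C. t) * \<alpha> ^ k)"
  proof (rule sum_mono)
    fix C assume C: "C \<in> Pow ?U"
    have cw0: "0 \<le> cs_weight n p C" using C cw_nonneg by auto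
    show "(if k \<le> card C then 0 else cs_weight n p C) \<le> cs_weight n p C * (\<Prod>x\<in>C. t) * \<alpha> ^ k"
    proof (cases "k \<le> card C")
      case True then show ?thesis using cw0 t0 a1 by simp
    next
      case False
      have "\<alpha> ^ card C \<le> \<alpha> ^ k" using False a1 by (intro power_increasing) auto
      then have "1 \<le> t ^ card C * \<alpha> ^ k" using a1 by (simp add: t_def power_one_over divide_simps)
      then have "cs_weight n p C * 1 \<le> cs_weight n p C * (t ^ card C * \<alpha> ^ k)"
        using cw0 by (intro mult_left_mono) auto
      then show ?thesis using False by (simp add: mult.assoc)
    qed
  qed
  also have "\<dots> = \<alpha> ^ k * (\<Prod>x\<in>?U. p x * t + (1 - p x))"
  proof -
    have "(\<Sum>C\<in>Pow ?U. cs_weight n p C * (\<Prod>x\<in>C. t) * \<alpha> ^ k) = \<alpha> ^ k * (\<Sum>C\<in>Pow ?U. cs_weight n p C * (\<Prod>x\<in>C. t))"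
      by (simp add: sum_distrib_left mult_ac)
    then show ?thesis using cw_sum_gen[of "\<lambda>_. t"] by simp
  qed
  also have "(\<Prod>x\<in>?U. p x * t + (1 - p x)) \<le> (\<Prod>x\<in>?U. exp (p x * (t - 1)))"
  proof (rule prod_mono)
    fix x assume "x \<in> ?U"
    then have "0 \<le> p x" "p x \<le> 1" using p01 by (auto simp: less_imp_le)
    show "0 \<le> p x * t + (1 - p x) \<and> p x * t + (1 - p x) \<le> exp (p x * (t - 1))"
    proof
      show "0 \<le> p x * t + (1 - p x)" using \<open>p x \<le> 1\<close> mult_nonneg_nonneg[of "p x" t] t0 \<open>0 \<le> p x\<close> by linarith
      have "p x * t + (1 - p x) = 1 + p x * (t - 1)" by (simp add: algebra_simps)
      then show "p x * t + (1 - p x) \<le> exp (p x * (t - 1))" using exp_ge_add_one_self[of "p x * (t - 1)"] by linarith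
    qed
  qed
  also have "\<dots> = exp ((t - 1) * (\<Sum>x\<in>?U. p x))"
    by (simp add: exp_sum[symmetric] sum_distrib_left mult.commute)
  also have "\<dots> \<le> exp ((t - 1) * (\<alpha> * real k))"
    using t0 sp by (simp add: mult_left_mono_neg)
  also have "(t - 1) * (\<alpha> * real k) = real k * (1 - \<alpha>)" using a1 by (simp add: t_def algebra_simps)
  finally have "(\<Sum>C\<in>Pow ?U. if k \<le> card C then 0 else cs_weight n p C) \<le> \<alpha> ^ k * exp (real k * (1 - \<alpha>))"
    using a1 by (simp add: mult_left_mono)
  also have "\<alpha> ^ k * exp (real k * (1 - \<alpha>)) = (\<alpha> * exp (1 - \<alpha>)) ^ k"
    by (simp add: power_mult_distrib exp_of_nat_mult[symmetric])
  finally show ?thesis using split by linarith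
qed


lemma R_top_finite: "finite (R_top n k i l)"
  unfolding R_top_def rankings_def
  by (rule finite_subset[OF _ Lr_finite[OF fin_U, of n k]]) (auto simp: Lr_def)

lemma R_qf:
  assumes "C \<subseteq> universe n"
  shows "(\<Sum>r\<in>R_top n k i l. Pr_PL u C r) = qf u C l k i"
proof -
  have "qf u C l k i = (\<Sum>r\<in>Lr C k. if r \<in> {r. i \<in> set (take l r)} then Pr_PL u C r else 0)"
    unfolding qf_def by (intro sum.cong) auto
  also have "\<dots> = (\<Sum>r\<in>Lr C k \<inter> {r. i \<in> set (take l r)}. Pr_PL u C r)"
    using assms finite_subset[OF assms fin_U] by (subst sum.inter_restrict) (auto intro: Lr_finite)
  finally have q: "qf u C l k i = (\<Sum>r\<in>Lr C k \<inter> {r. i \<in> set (take l r)}. Pr_PL u C r)" .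
  have "(\<Sum>r\<in>R_top n k i l. Pr_PL u C r) = (\<Sum>r\<in>Lr C k \<inter> {r. i \<in> set (take l r)}. Pr_PL u C r)"
  proof (rule sum.mono_neutral_cong_right[OF R_top_finite])
    show "Lr C k \<inter> {r. i \<in> set (take l r)} \<subseteq> R_top n k i l"
      using assms by (auto simp: Lr_def R_top_def rankings_def)
    show "\<forall>r\<in>R_top n k i l - Lr C k \<inter> {r. i \<in> set (take l r)}. Pr_PL u C r = 0"
      by (auto simp: Lr_def R_top_def rankings_def Pr_PL_def)
  qed auto
  then show ?thesis using q by simp
qed

lemma Ptop_eq:
  "Pr_top n k p u i l = (\<Sum>C\<in>Pow (universe n). Pr_C n k p C * qf u C l k i)"
proof -
  have "Pr_top n k p u i l = (\<Sum>r\<in>R_top n k i l. \<Sum>C\<in>Pow (universe n). Pr_C n k p C * Pr_PL u C r)"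
    unfolding Pr_top_def Pr_PLC_def ..
  also have "\<dots> = (\<Sum>C\<in>Pow (universe n). \<Sum>r\<in>R_top n k i l. Pr_C n k p C * Pr_PL u C r)"
    by (rule sum.swap)
  also have "\<dots> = (\<Sum>C\<in>Pow (universe n). Pr_C n k p C * qf u C l k i)"
    by (intro sum.cong refl) (simp add: sum_distrib_left[symmetric] R_qf)
  finally show ?thesis .
qed

definition hw :: "nat set \<Rightarrow> real" where
  "hw C = (if k \<le> card C then cs_weight n p C else 0)"

lemma hw_nonneg: "C \<subseteq> universe n \<Longrightarrow> 0 \<le> hw C"
  unfolding hw_def using cw_nonneg by auto

lemma hw_le: "C \<subseteq> universe n \<Longrightarrow> hw C \<le> cs_weight n p C"
  unfolding hw_def using cw_nonneg by auto

lemma zQ: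
  "z_norm n k p * Pr_top n k p u i l = (\<Sum>C\<in>Pow (universe n). hw C * qf u C l k i)"
  unfolding Ptop_eq sum_distrib_left
  using z_pos by (intro sum.cong refl) (auto simp: Pr_C_def hw_def)

lemma Q_nonneg: "0 \<le> Pr_top n k p u i l"
proof -
  have "0 \<le> z_norm n k p * Pr_top n k p u i l"
    unfolding zQ by (intro sum_nonneg mult_nonneg_nonneg hw_nonneg qf_nonneg) auto
  then show ?thesis using z_pos by (simp add: zero_le_mult_iff)
qed

lemma zQ_le: 
  assumes "i \<in> universe n"
  shows "z_norm n k p * Pr_top n k p u i l \<le> p i"
proof -
  have "z_norm n k p * Pr_top n k p u i l \<le> (\<Sum>C\<in>Pow (universe n). cs_weight n p C * (if i \<in> C then 1 else 0))"
    unfolding zQ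
  proof (rule sum_mono)
    fix C assume C: "C \<in> Pow (universe n)"
    show "hw C * qf u C l k i \<le> cs_weight n p C * (if i \<in> C then 1 else 0)"
    proof (cases "i \<in> C")
      case True
      have "hw C * qf u C l k i \<le> hw C * 1"
        using C by (intro mult_left_mono qf_le1 hw_nonneg) (auto intro: finite_subset)
      then show ?thesis using True hw_le[of C] C by simp
    next
      case False then show ?thesis by (simp add: qf_notin)
    qed
  qed
  then show ?thesis using cw_sum_i[OF assms] by simp
qed

lemma beta_le1:
  assumes "1 < (\<alpha>::real)"
  shows "\<alpha> * exp (1 - \<alpha>) \<le> 1"
proof -
  have "\<alpha> \<le> exp (\<alpha> - 1)" using exp_ge_add_one_self[of "\<alpha> - 1"] by simp
  then have "\<alpha> * exp (1 - \<alpha>) \<le> exp (\<alpha> - 1) * exp (1 - \<alpha>)" by (simp add: mult_right_mono)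
  also have "\<dots> = 1" by (simp add: exp_add[symmetric])
  finally show ?thesis .
qed

lemma init_ok:
  assumes a1: "1 < \<alpha>" and sp: "(\<Sum>i\<in>universe n. p i) \<ge> \<alpha> * real k" and i: "i \<in> universe n"
  shows "0 \<le> init_bounds k (Pr_top n k p u) \<alpha> i \<and> init_bounds k (Pr_top n k p u) \<alpha> i \<le> p i"
proof -
  let ?b = "\<alpha> * exp (1 - \<alpha>)"
  let ?Q = "Pr_top n k p u i k"
  have b0: "0 \<le> ?b" using a1 by simp
  have b1: "?b ^ k \<le> 1" using beta_le1[OF a1] b0 by (simp add: power_le_one)
  have Q0: "0 \<le> ?Q" by (rule Q_nonneg)
  have "?Q * (1 - ?b ^ k) \<le> ?Q * z_norm n k p"
    using z_lower[OF a1 sp] Q0 by (intro mult_left_mono) auto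
  also have "\<dots> \<le> p i" using zQ_le[OF i] by (simp add: mult.commute)
  finally show ?thesis using Q0 b1 unfolding init_bounds_def by simp
qed

lemma hw_mono_term:
  assumes "C \<subseteq> universe n" "i \<in> C" "j \<in> C" "i \<noteq> j" "u j \<le> u i"
  shows "hw C * qf u C l k j \<le> hw C * qf u C l k i"
proof (cases "k \<le> card C")
  case True
  have "finite C" using finite_subset[OF assms(1)] by simp
  then have "qf u C l k j \<le> qf u C l k i" using assms True by (intro qf_mono) auto
  then show ?thesis using hw_nonneg[OF assms(1)] by (rule mult_left_mono)
qed (simp add: hw_def)

lemma no_edge_kn:
  assumes "k = n" "i \<in> universe n" "j \<in> universe n" "i \<noteq> j" "u j \<le> u i"
  shows "Pr_top n k p u j l \<le> Pr_top n k p u i l"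
proof -
  have "z_norm n k p * Pr_top n k p u j l \<le> z_norm n k p * Pr_top n k p u i l"
    unfolding zQ
  proof (rule sum_mono)
    fix C assume C: "C \<in> Pow (universe n)"
    show "hw C * qf u C l k j \<le> hw C * qf u C l k i"
    proof (cases "k \<le> card C")
      case True
      then have "C = universe n" using C assms(1) by (intro card_seteq) auto
      then show ?thesis using assms by (intro hw_mono_term) auto
    qed (simp add: hw_def)
  qed
  then show ?thesis using z_pos by simp
qed

lemma cw_ins:
  assumes "universe n = insert a (insert b V)" "a \<notin> V" "b \<notin> V" "a \<noteq> b" "S \<subseteq> V"
  shows "cs_weight n p (insert a S) = p a * (1 - p b) * ((\<Prod>x\<in>S. p x) * (\<Prod>x\<in>V - S. 1 - p x))"
proof -
  have fV: "finite V" using fin_U[of n] assms(1) by (metis finite_insert)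
  then have fS: "finite S" using assms(5) finite_subset by auto
  have aS: "a \<notin> S" using assms by auto
  have e: "universe n - insert a S = insert b (V - S)" using assms by auto
  have bS: "b \<notin> V - S" using assms by auto
  show ?thesis unfolding cs_weight_def e using fS aS bS fV by (simp add: mult_ac)
qed

lemma edge_key:
  assumes kn': "k < n" and i: "i \<in> universe n" and j: "j \<in> universe n" and ij: "i \<noteq> j"
    and uij: "u j \<le> u i" and l: "1 \<le> l" "l \<le> k"
    and c1: "Pr_top n k p u i l / Pr_top n k p u j l \<le> 1"
  shows "p i * (1 - p j) \<le> (Pr_top n k p u i l / Pr_top n k p u j l) * p j * (1 - p i)"
proof -
  let ?U = "universe n"
  define Qi where "Qi = Pr_top n k p u i l"
  define Qj where "Qj = Pr_top n k p u j l"
  define c where "c = Qi / Qj"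
  define z where "z = z_norm n k p"
  define V where "V = ?U - {i} - {j}"
  have UV: "?U = insert i (insert j V)" using i j unfolding V_def by auto
  have UV': "?U = insert j (insert i V)" using i j unfolding V_def by auto
  have fV: "finite V" unfolding V_def by simp
  have iV: "i \<notin> V" "j \<notin> V" unfolding V_def by auto
  have cV: "n = Suc (Suc (card V))" using UV fV iV ij card_U[of n] by simp
  have sub: "\<And>S. S \<subseteq> V \<Longrightarrow> S \<subseteq> ?U" unfolding V_def by auto
  define gi where "gi = (\<lambda>C. hw C * qf u C l k i)"
  define gj where "gj = (\<lambda>C. hw C * qf u C l k j)"
  define Xi where "Xi = (\<Sum>S\<in>Pow V. gi (insert i S))"
  define Ai where "Ai = (\<Sum>S\<in>Pow V. gi (insert i (insert j S)))"
  define Yj where "Yj = (\<Sum>S\<in>Pow V. gj (insert j S))"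
  define Aj where "Aj = (\<Sum>S\<in>Pow V. gj (insert i (insert j S)))"
  define X' where "X' = (\<Sum>S\<in>Pow V. hw (insert i S) * qf u (insert j S) l k j)"
  define P where "P = p j * (1 - p i)"
  define R where "R = p i * (1 - p j)"
  have pi: "0 < p i" "p i \<le> 1" and pj: "0 < p j" "p j \<le> 1" using p01 i j by auto
  have zQi: "z * Qi = Xi + Ai"
  proof -
    have "z * Qi = (\<Sum>C\<in>Pow ?U. gi C)" unfolding z_def Qi_def gi_def zQ ..
    also have "\<dots> = (\<Sum>S\<in>Pow V. gi S + gi (insert i S) + gi (insert j S) + gi (insert i (insert j S)))"
      unfolding UV by (rule sum_Pow_insert2) (use fV iV ij in auto)
    also have "\<dots> = (\<Sum>S\<in>Pow V. gi (insert i S) + gi (insert i (insert j S)))"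
    proof (rule sum.cong[OF refl])
      fix S assume "S \<in> Pow V"
      then have "i \<notin> S" "i \<notin> insert j S" using iV ij by auto
      then show "gi S + gi (insert i S) + gi (insert j S) + gi (insert i (insert j S)) = gi (insert i S) + gi (insert i (insert j S))"
        by (simp add: gi_def qf_notin)
    qed
    finally show ?thesis unfolding Xi_def Ai_def by (simp add: sum.distrib)
  qed
  have zQj: "z * Qj = Yj + Aj"
  proof -
    have "z * Qj = (\<Sum>C\<in>Pow ?U. gj C)" unfolding z_def Qj_def gj_def zQ ..
    also have "\<dots> = (\<Sum>S\<in>Pow V. gj S + gj (insert i S) + gj (insert j S) + gj (insert i (insert j S)))"
      unfolding UV by (rule sum_Pow_insert2) (use fV iV ij in auto)
    also have "\<dots> = (\<Sum>S\<in>Pow V. gj (insert j S) + gj (insert i (insert j S)))"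
    proof (rule sum.cong[OF refl])
      fix S assume "S \<in> Pow V"
      then have "j \<notin> S" "j \<notin> insert i S" using iV ij by auto
      then show "gj S + gj (insert i S) + gj (insert j S) + gj (insert i (insert j S)) = gj (insert j S) + gj (insert i (insert j S))"
        by (simp add: gj_def qf_notin)
    qed
    finally show ?thesis unfolding Yj_def Aj_def by (simp add: sum.distrib)
  qed
  have AjAi: "Aj \<le> Ai" unfolding Aj_def Ai_def gi_def gj_def
    by (intro sum_mono hw_mono_term) (use uij ij sub i j in auto)
  have Aj0: "0 \<le> Aj" unfolding Aj_def gj_def
    by (intro sum_nonneg mult_nonneg_nonneg hw_nonneg qf_nonneg) (use sub i j in auto)
  have Yj0: "0 \<le> Yj" unfolding Yj_def gj_def
    by (intro sum_nonneg mult_nonneg_nonneg hw_nonneg qf_nonneg) (use sub i j in auto)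
  have X'Xi: "X' \<le> Xi" unfolding X'_def Xi_def gi_def
  proof (rule sum_mono)
    fix S assume S: "S \<in> Pow V"
    have fS: "finite S" using S fV finite_subset by auto
    have iS: "i \<notin> S" "j \<notin> S" using S iV by auto
    show "hw (insert i S) * qf u (insert j S) l k j \<le> hw (insert i S) * qf u (insert i S) l k i"
    proof (cases "k \<le> card (insert i S)")
      case True
      then have "qf u (insert j S) l k j \<le> qf u (insert i S) l k i"
        using fS iS uij by (intro qf_swap) auto
      then show ?thesis using hw_nonneg[of "insert i S"] S sub i by (intro mult_left_mono) auto
    qed (simp add: hw_def)
  qed
  have PR: "P * X' = R * Yj" unfolding X'_def Yj_def gj_def sum_distrib_left
  proof (rule sum.cong[OF refl])
    fix S assume S: "S \<in> Pow V"
    have fS: "finite S" using S fV finite_subset by auto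
    have iS: "i \<notin> S" "j \<notin> S" using S iV by auto
    have cc: "card (insert i S) = card (insert j S)" using fS iS by simp
    have "hw (insert i S) * P = hw (insert j S) * R"
      unfolding hw_def cc using cw_ins[OF UV iV ij, of S] cw_ins[OF UV' iV(2) iV(1) ij[symmetric], of S] S
      by (simp add: P_def R_def mult_ac)
    then show "P * (hw (insert i S) * qf u (insert j S) l k j) = R * (hw (insert j S) * qf u (insert j S) l k j)"
      by (metis mult.assoc mult.commute)
  qed
  have z0: "0 < z" unfolding z_def by (rule z_pos)
  have Qj0: "0 < Qj"
  proof -
    have "hw ?U * qf u ?U l k j \<le> z * Qj" unfolding z_def Qj_def zQ
      by (rule member_le_sum) (auto intro!: mult_nonneg_nonneg hw_nonneg qf_nonneg)
    moreover have "0 < hw ?U * qf u ?U l k j"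
      using cw_U_pos kn l j by (intro mult_pos_pos) (auto simp: hw_def intro!: qf_pos)
    ultimately have "0 < z * Qj" by linarith
    then show ?thesis using z0 by (simp add: zero_less_mult_iff)
  qed
  have c0: "0 \<le> c" unfolding c_def Qi_def Qj_def by (intro divide_nonneg_nonneg Q_nonneg)
  have cle: "c \<le> 1" using c1 unfolding c_def Qi_def Qj_def .
  have cQ: "c * Qj = Qi" unfolding c_def using Qj0 by simp
  have eq: "c * (Yj + Aj) = Xi + Ai" using zQi zQj cQ by (metis mult.left_commute)
  have "c * Aj \<le> Ai" using cle Aj0 AjAi mult_left_le_one_le[of Aj c] c0 by linarith
  then have cY: "X' \<le> c * Yj" using eq X'Xi by (simp add: algebra_simps)
  show ?thesis
  proof (cases "p j = 1")
    case True
    have "0 \<le> c * (1 - p i)" using c0 pi by simp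
    then show ?thesis using True unfolding c_def Qi_def Qj_def by simp
  next
    case False
    then have pj1: "p j < 1" using pj by simp
    have Xi0: "0 < Xi"
    proof -
      have "gi (insert i V) \<le> Xi" unfolding Xi_def
        by (rule member_le_sum) (use sub i fV in \<open>auto simp: gi_def intro!: mult_nonneg_nonneg hw_nonneg qf_nonneg\<close>)
      moreover have "0 < gi (insert i V)"
      proof -
        have cd: "card (insert i V) = Suc (card V)" using fV iV by simp
        have "0 < cs_weight n p (insert i V)"
          unfolding cw_ins[OF UV iV ij order_refl] using pi pj1 p01 sub[of V]
          by (auto intro!: mult_pos_pos prod_pos)
        then have "0 < hw (insert i V)" unfolding hw_def cd using kn' cV by simp
        moreover have "0 < qf u (insert i V) l k i"
          using fV l kn' cV cd by (intro qf_pos) auto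
        ultimately show ?thesis unfolding gi_def by simp
      qed
      ultimately show ?thesis by linarith
    qed
    have Y0: "0 < Yj"
    proof (rule ccontr)
      assume "\<not> 0 < Yj"
      then have "Yj = 0" using Yj0 by simp
      then show False using eq Xi0 cY X'Xi Aj0 AjAi \<open>c * Aj \<le> Ai\<close> by simp
    qed
    have P0: "0 \<le> P" unfolding P_def using pi pj by simp
    have "R * Yj \<le> (P * c) * Yj" using PR cY P0 by (metis mult_left_mono mult.assoc)
    then have "R \<le> P * c" using Y0 by simp
    then show ?thesis unfolding P_def R_def c_def Qi_def Qj_def by (simp add: mult_ac)
  qed
qed
end


lemma upd_ok:
  fixes b c pi pj :: real
  assumes "0 \<le> b" "b \<le> pi" "pi \<le> 1" "0 \<le> pj" "pj \<le> 1" "0 \<le> c" "c \<le> 1"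
    and K: "pi * (1 - pj) \<le> c * pj * (1 - pi)"
  shows "b / (c - c * b + b) \<le> pj"
proof -
  define d where "d = c - c * b + b"
  have d0: "0 \<le> d" unfolding d_def using assms mult_left_le_one_le[of b c]
    by (simp add: algebra_simps)
  show ?thesis
  proof (cases "d = 0")
    case True then show ?thesis using assms unfolding d_def[symmetric] by simp
  next
    case False
    then have dp: "0 < d" using d0 by simp
    have f: "0 \<le> 1 - pj * (1 - c)" using assms mult_le_one[of pj "1 - c"] by simp
    have "b * (1 - pj * (1 - c)) \<le> pi * (1 - pj * (1 - c))" using assms f by (intro mult_right_mono)
    also have "\<dots> \<le> pj * c" using K by (simp add: algebra_simps)
    finally have "b \<le> pj * d" unfolding d_def by (simp add: algebra_simps)
    then show ?thesis using dp unfolding d_def[symmetric] by (simp add: divide_simps mult.commute)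
  qed
qed

definition binv :: "nat \<Rightarrow> (nat \<Rightarrow> real) \<Rightarrow> (nat \<Rightarrow> real) \<Rightarrow> bool" where
  "binv n p b \<longleftrightarrow> (\<forall>x\<in>universe n. 0 \<le> b x \<and> b x \<le> p x)"

context
  fixes n k :: nat and p u :: "nat \<Rightarrow> real"
  assumes kn: "k \<le> n" and p01: "\<forall>i\<in>universe n. 0 < p i \<and> p i \<le> 1"
begin

lemma step_ok:
  assumes b: "binv n p b" and e: "G_edge n k u (Pr_top n k p u) i j" and l: "l \<in> {1..k}"
  shows "binv n p (let c = Pr_top n k p u i l / Pr_top n k p u j l in
      if c \<le> 1 then b(j := max (b j) (b i / (c - c * b i + b i))) else b)"
proof -
  let ?Q = "Pr_top n k p u"
  have i: "i \<in> universe n" and j: "j \<in> universe n" and uij: "u j < u i"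
    and ex: "\<exists>l\<in>{1..k}. ?Q i l < ?Q j l" using e unfolding G_edge_def by auto
  have ij: "i \<noteq> j" using uij by auto
  have kn': "k < n"
  proof (rule ccontr)
    assume "\<not> k < n"
    then have "k = n" using kn by simp
    then have "\<And>l. ?Q j l \<le> ?Q i l" using no_edge_kn[OF kn p01 _ i j ij] uij by auto
    then show False using ex by (meson not_le)
  qed
  define c where "c = ?Q i l / ?Q j l"
  have c0: "0 \<le> c" unfolding c_def using Q_nonneg[OF kn p01] by (simp add: divide_nonneg_nonneg)
  have ge: "(let c = ?Q i l / ?Q j l in
      if c \<le> 1 then b(j := max (b j) (b i / (c - c * b i + b i))) else b) =
      (if c \<le> 1 then b(j := max (b j) (b i / (c - c * b i + b i))) else b)"
    by (simp add: Let_def c_def)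
  have "binv n p (if c \<le> 1 then b(j := max (b j) (b i / (c - c * b i + b i))) else b)"
  proof (cases "c \<le> 1")
    case True
    have K: "p i * (1 - p j) \<le> c * p j * (1 - p i)"
      unfolding c_def using edge_key[OF kn p01 kn' i j ij _ _ _ True[unfolded c_def]] uij l by auto
    have "b i / (c - c * b i + b i) \<le> p j"
      using b i j p01 c0 True K unfolding binv_def by (intro upd_ok) auto
    then show ?thesis using True b j unfolding binv_def by auto
  qed (use b in simp)
  then show ?thesis by (simp only: ge)
qed

lemma pe_ok:
  assumes "binv n p (fst bt)" "G_edge n k u (Pr_top n k p u) i j"
  shows "binv n p (fst (process_edge k (Pr_top n k p u) i j bt))"
proof -
  have gen: "\<And>bt. set ls \<subseteq> {1..k} \<Longrightarrow> binv n p (fst bt) \<Longrightarrow>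
     binv n p (fst (fold (\<lambda>l (b, t).
      (let c = Pr_top n k p u i l / Pr_top n k p u j l in
         if c \<le> 1 then b(j := max (b j) (b i / (c - c * b i + b i))) else b,
       t + 1)) ls bt))" for ls
  proof (induction ls)
    case Nil then show ?case by simp
  next
    case (Cons l ls)
    obtain b t where bt: "bt = (b, t)" by fastforce
    show ?case unfolding fold_Cons comp_def
      apply (rule Cons.IH)
      using Cons.prems apply simp
      using Cons.prems step_ok[OF _ assms(2), of b l] unfolding bt by simp
  qed
  have st: "set [1..<Suc k] \<subseteq> {1..k}" by (simp only: set_upt) auto
  show ?thesis unfolding process_edge_def by (rule gen[OF st assms(1)])
qed

lemma pv_ok:
  assumes "binv n p (fst bt)"
  shows "binv n p (fst (process_vertex n k u (Pr_top n k p u) i bt))"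
proof -
  have "\<And>bt. (\<forall>j\<in>set js. G_edge n k u (Pr_top n k p u) i j) \<Longrightarrow> binv n p (fst bt) \<Longrightarrow>
     binv n p (fst (fold (\<lambda>j. process_edge k (Pr_top n k p u) i j) js bt))" for js
  proof (induction js)
    case Nil then show ?case by simp
  next
    case (Cons j js)
    show ?case unfolding fold_Cons comp_def
      by (rule Cons.IH) (use Cons.prems pe_ok in auto)
  qed
  then show ?thesis unfolding process_vertex_def using assms by auto
qed

lemma alg_ok:
  assumes a1: "1 < \<alpha>" and sp: "(\<Sum>i\<in>universe n. p i) \<ge> \<alpha> * real k"
  shows "binv n p (fst (plc_bounds_alg n k u (Pr_top n k p u) \<alpha> ord))"
proof -
  have "\<And>bt. binv n p (fst bt) \<Longrightarrow>
     binv n p (fst (fold (\<lambda>i. process_vertex n k u (Pr_top n k p u) i) os bt))" for os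
  proof (induction os)
    case Nil then show ?case by simp
  next
    case (Cons i os)
    show ?case unfolding fold_Cons comp_def
      by (rule Cons.IH) (use Cons.prems pv_ok in auto)
  qed
  moreover have "binv n p (init_bounds k (Pr_top n k p u) \<alpha>)"
    unfolding binv_def using init_ok[OF kn p01 a1 sp] by blast
  ultimately show ?thesis unfolding plc_bounds_alg_def by auto
qed

end

lemma pe_cost: "snd (process_edge k Q i j bt) = snd bt + k"
proof -
  have "\<And>bt. snd (fold (\<lambda>l (b, t).
      (let c = Q i l / Q j l in
         if c \<le> 1 then b(j := max (b j) (b i / (c - c * b i + b i))) else b,
       t + 1)) ls bt) = snd bt + length ls" for ls
    by (induction ls) (auto simp: split_beta)
  then show ?thesis unfolding process_edge_def by simp
qed

lemma pv_cost: "snd (process_vertex n k u Q i bt) \<le> snd bt + (n + k * n)"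
proof -
  have fe: "\<And>bt. snd (fold (\<lambda>j. process_edge k Q i j) js bt) = snd bt + k * length js" for js
    by (induction js) (auto simp: pe_cost)
  have L: "length [1..<Suc n] = n" by simp
  have "length (filter (G_edge n k u Q i) [1..<Suc n]) \<le> n"
    by (metis L length_filter_le)
  then have "k * length (filter (G_edge n k u Q i) [1..<Suc n]) \<le> k * n" by simp
  then show ?thesis unfolding process_vertex_def fe by simp
qed

lemma alg_cost: "snd (fold (\<lambda>i. process_vertex n k u Q i) os bt) \<le> snd bt + length os * (n + k * n)"
proof (induction os arbitrary: bt)
  case Nil then show ?case by simp
next
  case (Cons i os)
  have "snd (fold (\<lambda>i. process_vertex n k u Q i) os (process_vertex n k u Q i bt))
      \<le> snd (process_vertex n k u Q i bt) + length os * (n + k * n)" by (rule Cons.IH)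
  also have "\<dots> \<le> snd bt + (n + k * n) + length os * (n + k * n)" using pv_cost by simp
  finally show ?case by simp
qed

lemma card_E: "card {(i, j). G_edge n k u Q i j} \<le> n * n"
proof -
  have "{(i, j). G_edge n k u Q i j} \<subseteq> universe n \<times> universe n" by (auto simp: G_edge_def)
  then have "card {(i, j). G_edge n k u Q i j} \<le> card (universe n \<times> universe n)"
    by (intro card_mono) auto
  then show ?thesis by (simp add: card_cartesian_product)
qed

lemma total_cost:
  assumes "1 \<le> k" "k \<le> n" "topo_order n k u Q ord"
  shows "real (snd (plc_bounds_alg n k u Q \<alpha> ord)) \<le> 6 * real k * real n ^ 2"
proof -
  have lo: "length ord = n" using assms(3) unfolding topo_order_def
    by (metis card_U distinct_card)
  have "snd (plc_bounds_alg n k u Q \<alpha> ord) \<le> pre_cost n k u Q + n * (n + k * n)"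
    unfolding plc_bounds_alg_def using alg_cost[of n k u Q ord "(init_bounds k Q \<alpha>, pre_cost n k u Q)"] lo by simp
  also have "\<dots> \<le> n + n * n * k + (n + n * n) + n * (n + k * n)"
    unfolding pre_cost_def using card_E[of n k u Q] by simp
  also have "\<dots> \<le> 6 * k * (n * n)"
  proof -
    have n1: "1 \<le> n" using assms by simp
    have a: "n * n \<le> k * (n * n)" using assms(1) by simp
    have b: "n \<le> n * n" using n1 by simp
    have "n + n * n * k + (n + n * n) + n * (n + k * n) = 2 * n + 2 * (k * (n * n)) + 2 * (n * n)"
      by (simp add: algebra_simps)
    then show ?thesis using a b by linarith
  qed
  finally have "snd (plc_bounds_alg n k u Q \<alpha> ord) \<le> 6 * k * (n * n)" .
  then have "real (snd (plc_bounds_alg n k u Q \<alpha> ord)) \<le> real (6 * k * (n * n))" by linarith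
  then show ?thesis by (simp add: power2_eq_square)
qed

theorem theorem5:
  shows "(\<forall>(n::nat) (k::nat) (p::nat \<Rightarrow> real) (u::nat \<Rightarrow> real) (\<alpha>::real) ord.
            k \<le> n \<longrightarrow> \<alpha> > 1 \<longrightarrow>
            (\<forall>i\<in>universe n. 0 < p i \<and> p i \<le> 1) \<longrightarrow>
            (\<Sum>i\<in>universe n. p i) \<ge> \<alpha> * real k \<longrightarrow>
            topo_order n k u (Pr_top n k p u) ord \<longrightarrow>
            (\<forall>i\<in>universe n. fst (plc_bounds_alg n k u (Pr_top n k p u) \<alpha> ord) i \<le> p i))
       \<and> (\<exists>C::real. \<forall>(n::nat) (k::nat) (u::nat \<Rightarrow> real) (Q::nat \<Rightarrow> nat \<Rightarrow> real) (\<alpha>::real) ord.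
            1 \<le> k \<longrightarrow> k \<le> n \<longrightarrow> topo_order n k u Q ord \<longrightarrow>
            real (snd (plc_bounds_alg n k u Q \<alpha> ord)) \<le> C * real k * real n ^ 2)"
proof (intro conjI allI impI)
  fix n k p u \<alpha> ord
  assume "k \<le> n" "1 < \<alpha>" "\<forall>i\<in>universe n. 0 < p i \<and> p i \<le> 1"
    "\<alpha> * real k \<le> (\<Sum>i\<in>universe n. p i)"
  then show "\<forall>i\<in>universe n. fst (plc_bounds_alg n k u (Pr_top n k p u) \<alpha> ord) i \<le> p i"
    using alg_ok[of k n p \<alpha> u ord] unfolding binv_def by blast
next
  show "\<exists>C::real. \<forall>(n::nat) (k::nat) (u::nat \<Rightarrow> real) (Q::nat \<Rightarrow> nat \<Rightarrow> real) (\<alpha>::real) ord.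
            1 \<le> k \<longrightarrow> k \<le> n \<longrightarrow> topo_order n k u Q ord \<longrightarrow>
            real (snd (plc_bounds_alg n k u Q \<alpha> ord)) \<le> C * real k * real n ^ 2"
    by (rule exI[of _ 6]) (auto intro: total_cost)
qed

end
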